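(* Let $R\in\mathbb{R}^{n\times m}$ be a matrix such that $\mathcal{K}_{\mathcal{R}}(R)=\{Rp: p\in\mathbb{R}^m,\ p\ge 0\}$ is a proper cone. Let $\mathcal{X}\subseteq\mathbb{R}^n$ and let $f:\mathcal{X}\to\mathbb{R}^n$ be differentiable with Jacobian $\partial f(x)$. Suppose that for every $x\in\mathcal{X}$ there exist $\alpha\in\mathbb{R}$ and a matrix $P\in\mathbb{R}^{m\times m}$ with all entries strictly positive such that $$(\alpha I+\partial f(x))R=RP.$$ Then the system $\dot x=f(x)$ is strictly K-cooperative with respect to $\mathcal{K}_{\mathcal{R}}(R)$.
   Context: Inequalities between vectors/matrices are entrywise; $P>0$ means every entry of $P$ is strictly positive. A proper cone is a set $\mathcal{K}\subseteq\mathbb{R}^n$ such that: (i) if $r_1,r_2\in\mathcal{K}$ and $p_1,p_2\ge 0$ are real, then $p_1r_1+p_2r_2\in\mathcal{K}$; (ii) $\mathcal{K}$ has nonempty interior; (iii) if $r\in\mathcal{K}\setminus\{0\}$ then $-r\notin\mathcal{K}$. The dual cone is $\mathcal{K}^*=\{h:\langle h,r\rangle\ge 0\ \forall r\in\mathcal{K}\}$. Strict K-cooperativity: for a proper cone $\mathcal{K}$ and differentiable $f:\mathcal{X}\to\mathbb{R}^n$, the system $\dot x=f(x)$ is strictly K-cooperative with respect to $\mathcal{K}$ if for all $x\in\mathcal{X}$, all $\delta x\in\mathcal{K}\setminus\{0\}$ and all $h\in\mathcal{K}^*\setminus\{0\}$, $\langle h,\delta x\rangle=0$ implies $\langle h,\partial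 f(x)\,\delta x\rangle>0$. *)

theory Defs
  imports "HOL-Analysis.Analysis"
begin

definition proper_cone :: "('a::euclidean_space) set \<Rightarrow> bool" where
  "proper_cone K \<longleftrightarrow>
     (\<forall>r1\<in>K. \<forall>r2\<in>K. \<forall>p1 p2::real. p1 \<ge> 0 \<longrightarrow> p2 \<ge> 0 \<longrightarrow> p1 *\<^sub>R r1 + p2 *\<^sub>R r2 \<in> K) \<and>
     interior K \<noteq> {} \<and>
     (\<forall>r\<in>K - {0}. - r \<notin> K)"

definition dual_cone :: "('a::euclidean_space) set \<Rightarrow> 'a set" where
  "dual_cone K = {h. \<forall>r\<in>K. inner h r \<ge> 0}"

definition col_cone :: "real^'m^'n \<Rightarrow> (real^'n) set" where
  "col_cone R = {R *v p | p. \<forall>i. p $ i \<ge> 0}"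

definition strictly_K_cooperative ::
  "(real^'n) set \<Rightarrow> (real^'n) set \<Rightarrow> (real^'n \<Rightarrow> real^'n^'n) \<Rightarrow> bool" where
  "strictly_K_cooperative K X J \<longleftrightarrow>
     (\<forall>x\<in>X. \<forall>dx\<in>K - {0}. \<forall>h\<in>dual_cone K - {0}.
        inner h dx = 0 \<longrightarrow> inner h (J x *v dx) > 0)"

end

theory Submission
  imports Defs
begin

lemma pos_mat_vec:
  fixes P :: "real^'m^'m" and p :: "real^'m"
  assumes P: "\<forall>i j. P $ i $ j > 0" and p: "\<forall>i. p $ i \<ge> 0" and pnz: "p \<noteq> 0"
  shows "(P *v p) $ i > 0"
proof -
  obtain k where k: "p $ k \<noteq> 0" using pnz by (metis vec_eq_iff zero_index)
  have "p $ k > 0" using k p by (metis less_eq_real_def)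
  hence "P $ i $ k * p $ k > 0" using P by simp
  moreover have "\<And>j. 0 \<le> P $ i $ j * p $ j" using P p by (simp add: less_imp_le)
  ultimately have "0 < (\<Sum>j\<in>UNIV. P $ i $ j * p $ j)"
    by (intro sum_pos2[of UNIV k]) auto
  thus ?thesis by (simp add: matrix_vector_mult_def)
qed

theorem proposition3:
  fixes R :: "real^'m^'n"
    and X :: "(real^'n) set"
    and f :: "real^'n \<Rightarrow> real^'n"
    and J :: "real^'n \<Rightarrow> real^'n^'n"
  assumes proper: "proper_cone (col_cone R)"
    and deriv: "\<And>x. x \<in> X \<Longrightarrow> (f has_derivative (\<lambda>h. J x *v h)) (at x within X)"
    and hyp: "\<And>x. x \<in> X \<Longrightarrow> \<exists>(\<alpha>::real) (P::real^'m^'m).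
                 (\<forall>i j. P $ i $ j > 0) \<and> (\<alpha> *\<^sub>R mat 1 + J x) ** R = R ** P"
  shows "strictly_K_cooperative (col_cone R) X J"
  unfolding strictly_K_cooperative_def
proof (intro ballI impI)
  fix x dx h
  assume x: "x \<in> X" and dx: "dx \<in> col_cone R - {0}" and h: "h \<in> dual_cone (col_cone R) - {0}"
    and orth: "inner h dx = 0"
  obtain p where dxp: "dx = R *v p" and p: "\<forall>i. p $ i \<ge> 0"
    using dx unfolding col_cone_def by auto
  have pnz: "p \<noteq> 0" using dx dxp by auto
  obtain \<alpha> P where P: "\<forall>i j. (P::real^'m^'m) $ i $ j > 0"
      and eq: "(\<alpha> *\<^sub>R mat 1 + J x) ** R = R ** P" using hyp[OF x] by blast
  have hK: "\<And>y. y \<in> col_cone R \<Longrightarrow> inner h y \<ge> 0" using h unfolding dual_cone_def by auto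
  define q where "q = h v* R"
  have innq: "\<And>v. inner h (R *v v) = inner q v" unfolding q_def by (simp add: dot_lmul_matrix)
  have qnn: "q $ j \<ge> 0" for j
  proof -
    have "R *v axis j 1 \<in> col_cone R" unfolding col_cone_def by (auto simp: axis_def)
    hence "inner q (axis j 1) \<ge> 0" using hK innq by metis
    thus ?thesis by (simp add: inner_axis)
  qed
  have qnz: "q \<noteq> 0"
  proof
    assume q0: "q = 0"
    have zero: "\<And>y. y \<in> col_cone R \<Longrightarrow> inner h y = 0"
      unfolding col_cone_def using innq q0 by auto
    obtain z where z: "z \<in> interior (col_cone R)" using proper unfolding proper_cone_def by auto
    then obtain e where e: "e > 0" "ball z e \<subseteq> col_cone R"
      using mem_interior by blast
    have hn: "norm h > 0" using h by auto
    define w where "w = z + (e / 2 / norm h) *\<^sub>R h"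
    have "dist z w < e" unfolding w_def dist_norm using e hn by simp
    hence "w \<in> col_cone R" using e by auto
    moreover have "z \<in> col_cone R" using z interior_subset by blast
    ultimately have "inner h w = 0" "inner h z = 0" using zero by auto
    hence "(e / 2 / norm h) * inner h h = 0" unfolding w_def by (simp add: inner_add_right)
    thus False using e hn by simp
  qed
  obtain j where j: "q $ j \<noteq> 0" using qnz by (metis vec_eq_iff zero_index)
  have qj: "q $ j > 0" using j qnn by (metis less_eq_real_def)
  have "J x *v dx = R *v (P *v p) - \<alpha> *\<^sub>R dx"
  proof -
    have "(\<alpha> *\<^sub>R mat 1 + J x) *v dx = R *v (P *v p)"
      using eq by (simp add: dxp matrix_vector_mul_assoc)
    moreover have "(\<alpha> *\<^sub>R mat 1 + J x) *v dx = \<alpha> *\<^sub>R dx + J x *v dx"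
      by (simp add: matrix_vector_mult_add_rdistrib flip: scaleR_matrix_vector_assoc)
    ultimately show ?thesis by (simp add: algebra_simps)
  qed
  hence "inner h (J x *v dx) = inner q (P *v p)"
    using orth by (simp add: inner_diff_right innq)
  also have "inner q (P *v p) = (\<Sum>i\<in>UNIV. q $ i * (P *v p) $ i)" by (simp add: inner_vec_def)
  also have "\<dots> > 0"
    using pos_mat_vec[OF P p pnz] qnn qj
    by (intro sum_pos2[of UNIV j]) (auto intro: mult_nonneg_nonneg less_imp_le)
  finally show "inner h (J x *v dx) > 0" .
qed

end
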